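(* There exist a finite graded poset $P$ with $\hat0$ and two CW-labelings $\lambda_1$ and $\lambda_2$ of $P$ such that the posets $Q_{\lambda_1}(P)$ and $Q_{\lambda_2}(P)$ are not isomorphic.
   Context: C-labelings: a maximal chain is an unrefinable chain from $\hat0$ to a maximal element. A C-labeling assigns to each pair $(\mathbf m,e)$, $\mathbf m$ a maximal chain and $e$ a cover relation of $\mathbf m$, a label in a poset $\Lambda$, such that maximal chains coinciding along their bottom $d$ cover relations have equal labels there. A rooted interval $[x,y]_{\mathbf r}$ is an interval with a saturated chain $\mathbf r$ from $\hat0$ to $x$, maximal chains $\mathbf c$ of $[x,y]$ labeled as in $\mathbf r\cup\mathbf c$. Increasing = strictly increasing label word; ascent-free = no consecutive labels $a<b$. CR-labeling: each rooted interval has exactly one increasing maximal chain. Rank two switching property: for every maximal chain $\mathbf m:\hat0=m_0\lessdot\cdots\lessdot m_k$ and $i<k$ with an ascent at rank $i$ there is a unique $m_i'\neq m_i$ such that replacing $m_i$ by $m_i'$ gives a maximal chain with the same labels except that those at ranks $i,i+1$ are swapped, and $m_i'$ is the same for all maximal chains agreeing with $\mathbf m$ in $m_0,\dots,m_{i+1}$ (quadratic exchange). CW-labeling: CR-labeling with the rank two switching property such that in each rooted interval distinct ascent-free maximal chains have distinct label words. $Q_\lambda(P)$: $C(P)$ is the set of saturated chains from $\hat0$ ordered by inclusion; $\mathbf c_1\sim_\lambda\mathbf c_2$ iff they end at the same $y$ and are connected by quadratic exchanges (forwards or backwards) among maximal chains of $[\hat0,y]$; $Q_\lambda(P)$ is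 the set of classes ordered by the transitive closure of: $X\le Y$ if some $\mathbf c\in X$, $\mathbf d\in Y$ have $\mathbf c\subseteq\mathbf d$. *)

theory Defs
  imports Main
begin

(* The j-th cover relation (1 <= j <= k) of a chain is (m_(j-1), m_j). *)

definition partial_order_on' :: "'a set \<Rightarrow> ('a \<Rightarrow> 'a \<Rightarrow> bool) \<Rightarrow> bool" where
  "partial_order_on' A le \<longleftrightarrow>
     (\<forall>x\<in>A. le x x) \<and>
     (\<forall>x\<in>A. \<forall>y\<in>A. le x y \<and> le y x \<longrightarrow> x = y) \<and>
     (\<forall>x\<in>A. \<forall>y\<in>A. \<forall>z\<in>A. le x y \<and> le y z \<longrightarrow> le x z)"

definition covers :: "nat set \<Rightarrow> (nat \<Rightarrow> nat \<Rightarrow> bool) \<Rightarrow> nat \<Rightarrow> nat \<Rightarrow> bool" where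
  "covers P le x y \<longleftrightarrow> x \<in> P \<and> y \<in> P \<and> le x y \<and> x \<noteq> y \<and>
     \<not> (\<exists>z\<in>P. le x z \<and> le z y \<and> z \<noteq> x \<and> z \<noteq> y)"

definition sat_chain :: "nat set \<Rightarrow> (nat \<Rightarrow> nat \<Rightarrow> bool) \<Rightarrow> nat list \<Rightarrow> bool" where
  "sat_chain P le xs \<longleftrightarrow> xs \<noteq> [] \<and> set xs \<subseteq> P \<and>
     (\<forall>i. Suc i < length xs \<longrightarrow> covers P le (xs ! i) (xs ! Suc i))"

definition rooted_chain :: "nat set \<Rightarrow> (nat \<Rightarrow> nat \<Rightarrow> bool) \<Rightarrow> nat list \<Rightarrow> bool" where
  "rooted_chain P le xs \<longleftrightarrow> sat_chain P le xs \<and> (\<forall>x\<in>P. le (hd xs) x)"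

definition max_chain :: "nat set \<Rightarrow> (nat \<Rightarrow> nat \<Rightarrow> bool) \<Rightarrow> nat list \<Rightarrow> bool" where
  "max_chain P le m \<longleftrightarrow> rooted_chain P le m \<and> (\<forall>y\<in>P. le (last m) y \<longrightarrow> y = last m)"

definition interval_chain :: "nat set \<Rightarrow> (nat \<Rightarrow> nat \<Rightarrow> bool) \<Rightarrow> nat \<Rightarrow> nat \<Rightarrow> nat list \<Rightarrow> bool" where
  "interval_chain P le x y c \<longleftrightarrow> sat_chain P le c \<and> hd c = x \<and> last c = y"

(* finite graded poset with \<hat>0: all saturated chains from \<hat>0 to the same element
   have the same length (equivalently, there is a rank function) *)
definition finite_graded_poset_0 :: "nat set \<Rightarrow> (nat \<Rightarrow> nat \<Rightarrow> bool) \<Rightarrow> bool" where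
  "finite_graded_poset_0 P le \<longleftrightarrow> finite P \<and> partial_order_on' P le \<and>
     (\<exists>z\<in>P. \<forall>x\<in>P. le z x) \<and>
     (\<forall>c d. rooted_chain P le c \<and> rooted_chain P le d \<and> last c = last d \<longrightarrow>
        length c = length d)"

definition lless :: "('a \<Rightarrow> 'a \<Rightarrow> bool) \<Rightarrow> 'a \<Rightarrow> 'a \<Rightarrow> bool" where
  "lless lle a b \<longleftrightarrow> lle a b \<and> a \<noteq> b"

(* C-labeling: lam m j is the label of the j-th cover relation of the maximal chain m;
   labels lie in the label poset (L, lle). *)
definition C_labeling :: "nat set \<Rightarrow> (nat \<Rightarrow> nat \<Rightarrow> bool) \<Rightarrow> nat set \<Rightarrow> (nat \<Rightarrow> nat \<Rightarrow> bool)
     \<Rightarrow> (nat list \<Rightarrow> nat \<Rightarrow> nat) \<Rightarrow> bool" where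
  "C_labeling P le L lle lam \<longleftrightarrow> partial_order_on' L lle \<and>
     (\<forall>m. max_chain P le m \<longrightarrow> (\<forall>j. 1 \<le> j \<and> j < length m \<longrightarrow> lam m j \<in> L)) \<and>
     (\<forall>m m' d. max_chain P le m \<and> max_chain P le m' \<and> take (Suc d) m = take (Suc d) m' \<longrightarrow>
        (\<forall>j. 1 \<le> j \<and> j \<le> d \<and> j < length m \<longrightarrow> lam m j = lam m' j))"

(* label of the j-th cover of a saturated chain s from \<hat>0, read off from any maximal
   chain extending s (well defined for a C-labeling) *)
definition chain_label :: "nat set \<Rightarrow> (nat \<Rightarrow> nat \<Rightarrow> bool) \<Rightarrow> (nat list \<Rightarrow> nat \<Rightarrow> nat)
     \<Rightarrow> nat list \<Rightarrow> nat \<Rightarrow> nat" where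
  "chain_label P le lam s j = lam (SOME m. max_chain P le m \<and> take (length s) m = s) j"

(* label word of the maximal chain c of [x,y] in the rooted interval [x,y]_r,
   labeled as in r \<union> c *)
definition label_word :: "nat set \<Rightarrow> (nat \<Rightarrow> nat \<Rightarrow> bool) \<Rightarrow> (nat list \<Rightarrow> nat \<Rightarrow> nat)
     \<Rightarrow> nat list \<Rightarrow> nat list \<Rightarrow> nat list" where
  "label_word P le lam r c =
     map (chain_label P le lam (r @ tl c)) [length r ..< length r + length c - 1]"

definition increasing_word :: "(nat \<Rightarrow> nat \<Rightarrow> bool) \<Rightarrow> nat list \<Rightarrow> bool" where
  "increasing_word lle w \<longleftrightarrow> (\<forall>i. Suc i < length w \<longrightarrow> lless lle (w ! i) (w ! Suc i))"

definition ascent_free_word :: "(nat \<Rightarrow> nat \<Rightarrow> bool) \<Rightarrow> nat list \<Rightarrow> bool" where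
  "ascent_free_word lle w \<longleftrightarrow> (\<forall>i. Suc i < length w \<longrightarrow> \<not> lless lle (w ! i) (w ! Suc i))"

definition CR_labeling :: "nat set \<Rightarrow> (nat \<Rightarrow> nat \<Rightarrow> bool) \<Rightarrow> nat set \<Rightarrow> (nat \<Rightarrow> nat \<Rightarrow> bool)
     \<Rightarrow> (nat list \<Rightarrow> nat \<Rightarrow> nat) \<Rightarrow> bool" where
  "CR_labeling P le L lle lam \<longleftrightarrow> C_labeling P le L lle lam \<and>
     (\<forall>r y. rooted_chain P le r \<and> y \<in> P \<and> le (last r) y \<longrightarrow>
        (\<exists>!c. interval_chain P le (last r) y c \<and> increasing_word lle (label_word P le lam r c)))"

definition ascent_at :: "(nat \<Rightarrow> nat \<Rightarrow> bool) \<Rightarrow> (nat list \<Rightarrow> nat \<Rightarrow> nat) \<Rightarrow> nat list \<Rightarrow> nat \<Rightarrow> bool" where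
  "ascent_at lle lam m i \<longleftrightarrow> 1 \<le> i \<and> Suc i < length m \<and> lless lle (lam m i) (lam m (Suc i))"

definition switches :: "nat set \<Rightarrow> (nat \<Rightarrow> nat \<Rightarrow> bool) \<Rightarrow> (nat list \<Rightarrow> nat \<Rightarrow> nat)
     \<Rightarrow> nat list \<Rightarrow> nat \<Rightarrow> nat \<Rightarrow> bool" where
  "switches P le lam m i z \<longleftrightarrow> z \<noteq> m ! i \<and> max_chain P le (m[i := z]) \<and>
     (\<forall>j. 1 \<le> j \<and> j < length m \<longrightarrow>
        lam (m[i := z]) j = (if j = i then lam m (Suc i) else if j = Suc i then lam m i else lam m j))"

definition rank_two_switching :: "nat set \<Rightarrow> (nat \<Rightarrow> nat \<Rightarrow> bool) \<Rightarrow> (nat \<Rightarrow> nat \<Rightarrow> bool)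
     \<Rightarrow> (nat list \<Rightarrow> nat \<Rightarrow> nat) \<Rightarrow> bool" where
  "rank_two_switching P le lle lam \<longleftrightarrow>
     (\<forall>m i. max_chain P le m \<and> ascent_at lle lam m i \<longrightarrow>
        (\<exists>!z. switches P le lam m i z) \<and>
        (\<forall>m' z z'. max_chain P le m' \<and> take (i + 2) m' = take (i + 2) m \<and>
            switches P le lam m i z \<and> switches P le lam m' i z' \<longrightarrow> z = z'))"

definition CW_labeling :: "nat set \<Rightarrow> (nat \<Rightarrow> nat \<Rightarrow> bool) \<Rightarrow> nat set \<Rightarrow> (nat \<Rightarrow> nat \<Rightarrow> bool)
     \<Rightarrow> (nat list \<Rightarrow> nat \<Rightarrow> nat) \<Rightarrow> bool" where
  "CW_labeling P le L lle lam \<longleftrightarrow> CR_labeling P le L lle lam \<and> rank_two_switching P le lle lam \<and>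
     (\<forall>r y c c'. rooted_chain P le r \<and> interval_chain P le (last r) y c \<and>
        interval_chain P le (last r) y c' \<and>
        ascent_free_word lle (label_word P le lam r c) \<and>
        ascent_free_word lle (label_word P le lam r c') \<and> c \<noteq> c' \<longrightarrow>
        label_word P le lam r c \<noteq> label_word P le lam r c')"

(* one quadratic exchange (forward direction) on a saturated chain c from \<hat>0 to y,
   i.e. on a maximal chain of [\<hat>0,y]: performed via a maximal chain m of P extending c *)
definition quad_exchange :: "nat set \<Rightarrow> (nat \<Rightarrow> nat \<Rightarrow> bool) \<Rightarrow> (nat \<Rightarrow> nat \<Rightarrow> bool)
     \<Rightarrow> (nat list \<Rightarrow> nat \<Rightarrow> nat) \<Rightarrow> nat list \<Rightarrow> nat list \<Rightarrow> bool" where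
  "quad_exchange P le lle lam c c' \<longleftrightarrow>
     (\<exists>m i z. max_chain P le m \<and> take (length c) m = c \<and> Suc i < length c \<and>
        ascent_at lle lam m i \<and> switches P le lam m i z \<and> c' = c[i := z])"

definition Q_equiv :: "nat set \<Rightarrow> (nat \<Rightarrow> nat \<Rightarrow> bool) \<Rightarrow> (nat \<Rightarrow> nat \<Rightarrow> bool)
     \<Rightarrow> (nat list \<Rightarrow> nat \<Rightarrow> nat) \<Rightarrow> nat list \<Rightarrow> nat list \<Rightarrow> bool" where
  "Q_equiv P le lle lam c1 c2 \<longleftrightarrow> rooted_chain P le c1 \<and> rooted_chain P le c2 \<and>
     last c1 = last c2 \<and>
     (\<lambda>a b. quad_exchange P le lle lam a b \<or> quad_exchange P le lle lam b a)\<^sup>*\<^sup>* c1 c2"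

definition Q_carrier :: "nat set \<Rightarrow> (nat \<Rightarrow> nat \<Rightarrow> bool) \<Rightarrow> (nat \<Rightarrow> nat \<Rightarrow> bool)
     \<Rightarrow> (nat list \<Rightarrow> nat \<Rightarrow> nat) \<Rightarrow> nat list set set" where
  "Q_carrier P le lle lam =
     {{d. Q_equiv P le lle lam c d} | c. rooted_chain P le c}"

definition Q_le :: "nat set \<Rightarrow> (nat \<Rightarrow> nat \<Rightarrow> bool) \<Rightarrow> (nat \<Rightarrow> nat \<Rightarrow> bool)
     \<Rightarrow> (nat list \<Rightarrow> nat \<Rightarrow> nat) \<Rightarrow> nat list set \<Rightarrow> nat list set \<Rightarrow> bool" where
  "Q_le P le lle lam =
     (\<lambda>X Y. X \<in> Q_carrier P le lle lam \<and> Y \<in> Q_carrier P le lle lam \<and>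
        (\<exists>c\<in>X. \<exists>d\<in>Y. set c \<subseteq> set d))\<^sup>*\<^sup>*"

definition order_iso :: "'a set \<Rightarrow> ('a \<Rightarrow> 'a \<Rightarrow> bool) \<Rightarrow> 'b set \<Rightarrow> ('b \<Rightarrow> 'b \<Rightarrow> bool) \<Rightarrow> bool" where
  "order_iso A ra B rb \<longleftrightarrow>
     (\<exists>f. bij_betw f A B \<and> (\<forall>x\<in>A. \<forall>y\<in>A. ra x y \<longleftrightarrow> rb (f x) (f y)))"

end

theory Submission
  imports Defs
begin

definition P0 :: "nat set" where "P0 = {0,1,2,3,4,5}"
definition le0 :: "nat \<Rightarrow> nat \<Rightarrow> bool" where
 "le0 x y \<longleftrightarrow> x = y \<or> x = 0 \<or> (y = 4 \<and> x \<in> {1,2,3}) \<or> (y = 5 \<and> x \<in> {1,2})"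
definition CV :: "(nat \<times> nat) list" where
 "CV = [(0,1),(0,2),(0,3),(1,4),(2,4),(3,4),(1,5),(2,5)]"
definition SC :: "nat list list" where
 "SC = [[0], [1], [2], [3], [4], [5], [0, 1], [0, 2], [0, 3], [1, 4], [2, 4], [3, 4], [1, 5], [2, 5],
   [0, 1, 4], [0, 1, 5], [0, 2, 4], [0, 2, 5], [0, 3, 4]]"
definition RC :: "nat list list" where
 "RC = [[0], [0, 1], [0, 2], [0, 3], [0, 1, 4], [0, 1, 5], [0, 2, 4], [0, 2, 5], [0, 3, 4]]"
definition MC :: "nat list list" where
 "MC = [[0, 1, 4], [0, 1, 5], [0, 2, 4], [0, 2, 5], [0, 3, 4]]"

lemma covers_iff: "covers P0 le0 x y \<longleftrightarrow> (x,y) \<in> set CV"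
  unfolding covers_def P0_def le0_def CV_def by auto

lemma sat_Cons2: "sat_chain A r (x#y#xs) \<longleftrightarrow> covers A r x y \<and> sat_chain A r (y#xs)"
proof
  assume h: "sat_chain A r (x#y#xs)"
  have c: "\<And>i. Suc i < length (x#y#xs) \<Longrightarrow> covers A r ((x#y#xs)!i) ((x#y#xs)!Suc i)"
    using h unfolding sat_chain_def by blast
  have "covers A r x y" using c[of 0] by simp
  moreover have "sat_chain A r (y#xs)" unfolding sat_chain_def
  proof (intro conjI allI impI)
    show "set (y#xs) \<subseteq> A" using h unfolding sat_chain_def by auto
    fix i assume "Suc i < length (y#xs)"
    then show "covers A r ((y#xs)!i) ((y#xs)!Suc i)" using c[of "Suc i"] by simp
  qed simp
  ultimately show "covers A r x y \<and> sat_chain A r (y#xs)" ..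
next
  assume h: "covers A r x y \<and> sat_chain A r (y#xs)"
  show "sat_chain A r (x#y#xs)" unfolding sat_chain_def
  proof (intro conjI allI impI)
    show "set (x#y#xs) \<subseteq> A" using h unfolding sat_chain_def covers_def by auto
    fix i assume i: "Suc i < length (x#y#xs)"
    show "covers A r ((x#y#xs)!i) ((x#y#xs)!Suc i)"
    proof (cases i)
      case 0 then show ?thesis using h by simp
    next
      case (Suc j) then show ?thesis using h i unfolding sat_chain_def by auto
    qed
  qed simp
qed

lemma sat_single: "sat_chain A r [x] \<longleftrightarrow> x \<in> A"
  unfolding sat_chain_def by auto
lemma mem_P0: "x \<in> P0 \<longleftrightarrow> x \<le> 5" unfolding P0_def by auto
definition rk :: "nat \<Rightarrow> nat" where "rk x = (if x = 0 then 0 else if x \<le> 3 then 1 else 2)"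
lemma covers_rk: "covers P0 le0 x y \<Longrightarrow> rk y = Suc (rk x) \<and> rk y \<le> 2"
  unfolding covers_iff CV_def rk_def by auto

lemma sat_iff: "sat_chain P0 le0 xs \<longleftrightarrow> xs \<in> set SC"
proof
  assume h: "sat_chain P0 le0 xs"
  show "xs \<in> set SC"
  proof (cases xs)
    case Nil then show ?thesis using h by (simp add: sat_chain_def)
  next
    case (Cons x t)
    show ?thesis
    proof (cases t)
      case Nil then show ?thesis using Cons h by (auto simp: sat_single SC_def mem_P0)
    next
      case (Cons y t2)
      show ?thesis
      proof (cases t2)
        case Nil then have "sat_chain P0 le0 [x,y]" using Cons \<open>xs = x#t\<close> h by simp
          then have "[x,y] \<in> set SC"
            apply (simp add: sat_Cons2 covers_iff)
            apply (simp only: CV_def set_simps insert_iff empty_iff prod.inject)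
            apply (elim disjE conjE; simp add: SC_def)
            done
          then show ?thesis using Cons \<open>xs = x#t\<close> Nil by simp
      next
        case (Cons z t3)
        show ?thesis
        proof (cases t3)
          case Nil then have "sat_chain P0 le0 [x,y,z]" using Cons \<open>t = y#t2\<close> \<open>xs = x#t\<close> h by simp
          then have "[x,y,z] \<in> set SC"
            apply (simp add: sat_Cons2 covers_iff)
            apply (simp only: CV_def set_simps insert_iff empty_iff prod.inject)
            apply (elim disjE conjE; simp add: SC_def)
            done
          then show ?thesis using Cons \<open>t = y#t2\<close> \<open>xs = x#t\<close> Nil by simp
        next
          case (Cons w t4)
          then show ?thesis using \<open>t2 = z#t3\<close> \<open>t = y#t2\<close> \<open>xs = x#t\<close> h
            by (auto simp: sat_Cons2 dest!: covers_rk)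
        qed
      qed
    qed
  qed
next
  assume "xs \<in> set SC" then show "sat_chain P0 le0 xs"
    unfolding SC_def by (auto simp: sat_Cons2 sat_single covers_iff CV_def mem_P0)
qed

lemma bottom_iff: "(\<forall>x\<in>P0. le0 h x) \<longleftrightarrow> h = 0"
  by (auto simp: P0_def le0_def)
lemma maxel_iff: "(\<forall>y\<in>P0. le0 l y \<longrightarrow> y = l) \<longleftrightarrow> (l = 4 \<or> l = 5 \<or> l > 5)"
  by (auto simp: P0_def le0_def)

lemma RC_filter: "RC = filter (\<lambda>c. hd c = 0) SC"
  by (simp add: RC_def SC_def)
lemma MC_filter: "MC = filter (\<lambda>c. 4 \<le> last c) RC"
  by (simp add: RC_def MC_def)

lemma rooted_iff: "rooted_chain P0 le0 xs \<longleftrightarrow> xs \<in> set RC"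
  unfolding rooted_chain_def sat_iff bottom_iff RC_filter by simp

lemma RC_last: "c \<in> set RC \<Longrightarrow> last c \<le> 5"
  unfolding RC_def by auto

lemma max_iff: "max_chain P0 le0 xs \<longleftrightarrow> xs \<in> set MC"
  unfolding max_chain_def rooted_iff maxel_iff MC_filter using RC_last by fastforce

lemma interval_iff: "interval_chain P0 le0 x y c \<longleftrightarrow> c \<in> set SC \<and> hd c = x \<and> last c = y"
  unfolding interval_chain_def sat_iff by auto

lemma RC_len: "c \<in> set RC \<Longrightarrow> length c = Suc (rk (last c))"
  unfolding RC_def rk_def by auto

lemma graded: "finite_graded_poset_0 P0 le0"
  unfolding finite_graded_poset_0_def
proof (intro conjI)
  show "finite P0" by (simp add: P0_def)
  show "partial_order_on' P0 le0" unfolding partial_order_on'_def le0_def by auto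
  show "\<exists>z\<in>P0. \<forall>x\<in>P0. le0 z x" by (rule bexI[of _ 0]) (auto simp: P0_def le0_def)
  show "\<forall>c d. rooted_chain P0 le0 c \<and> rooted_chain P0 le0 d \<and> last c = last d \<longrightarrow> length c = length d"
    unfolding rooted_iff using RC_len by metis
qed


definition lamF :: "(nat \<Rightarrow> nat \<Rightarrow> nat) \<Rightarrow> nat list \<Rightarrow> nat \<Rightarrow> nat" where
  "lamF g m j = (if j = 1 then m!1 else g (m!1) (m!2))"
definition g1 :: "nat \<Rightarrow> nat \<Rightarrow> nat" where "g1 a y = (if a = 1 then 2 else 1)"
definition g2 :: "nat \<Rightarrow> nat \<Rightarrow> nat" where "g2 a y = (if a = 1 then (if y = 4 then 3 else 2) else 1)"

lemma ex1_unfold: assumes e: "\<exists>!c. c \<in> set xs \<and> Q c" shows "\<exists>a. (a \<in> set xs \<and> Q a) \<and> (\<forall>c. c \<in> set xs \<and> Q c \<longrightarrow> c = a)"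
  using e by (rule ex1E) blast

lemma ex1_filter: "distinct xs \<Longrightarrow> (\<exists>!c. c \<in> set xs \<and> Q c) \<longleftrightarrow> length (filter Q xs) = 1"
proof
  assume d: "distinct xs" and e: "\<exists>!c. c \<in> set xs \<and> Q c"
  obtain a where a: "a \<in> set xs \<and> Q a" and u: "\<forall>c. c \<in> set xs \<and> Q c \<longrightarrow> c = a"
    using ex1_unfold[OF e] by blast
  have "set (filter Q xs) = {a}"
  proof (rule set_eqI)
    fix c
    have "c \<in> set (filter Q xs) \<longleftrightarrow> c \<in> set xs \<and> Q c" by simp
    also have "\<dots> \<longleftrightarrow> c = a" using a u by blast
    finally show "c \<in> set (filter Q xs) \<longleftrightarrow> c \<in> {a}" by simp
  qed
  moreover have "distinct (filter Q xs)" using d by (rule distinct_filter)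
  ultimately have "card (set (filter Q xs)) = length (filter Q xs)" using distinct_card by blast
  then show "length (filter Q xs) = 1" using \<open>set (filter Q xs) = {a}\<close> by simp
next
  assume l: "length (filter Q xs) = 1"
  then obtain a where f: "filter Q xs = [a]"
    by (metis One_nat_def length_0_conv length_Suc_conv)
  have a: "a \<in> set xs \<and> Q a"
  proof -
    have "a \<in> set (filter Q xs)" using f by simp
    then show ?thesis by simp
  qed
  have u: "\<And>c. c \<in> set xs \<Longrightarrow> Q c \<Longrightarrow> c = a"
  proof -
    fix c assume "c \<in> set xs" "Q c"
    then have "c \<in> set (filter Q xs)" by simp
    then show "c = a" using f by simp
  qed
  show "\<exists>!c. c \<in> set xs \<and> Q c"
  proof (rule ex1I[of _ a])
    show "a \<in> set xs \<and> Q a" using a .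
    fix c assume "c \<in> set xs \<and> Q c" then show "c = a" using u by blast
  qed
qed

lemma inc_Nil[simp]: "increasing_word lle []" by (simp add: increasing_word_def)
lemma inc_single[simp]: "increasing_word lle [a]" by (simp add: increasing_word_def)
lemma inc_Cons2[simp]: "increasing_word lle (a#b#w) \<longleftrightarrow> lless lle a b \<and> increasing_word lle (b#w)"
  unfolding increasing_word_def
  by (auto simp: nth_Cons split: nat.splits)
lemma af_Nil[simp]: "ascent_free_word lle []" by (simp add: ascent_free_word_def)
lemma af_single[simp]: "ascent_free_word lle [a]" by (simp add: ascent_free_word_def)
lemma af_Cons2[simp]: "ascent_free_word lle (a#b#w) \<longleftrightarrow> \<not> lless lle a b \<and> ascent_free_word lle (b#w)"
  unfolding ascent_free_word_def
  by (auto simp: nth_Cons split: nat.splits)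
lemma lless_nat[simp]: "lless (\<le>) a (b::nat) \<longleftrightarrow> a < b" by (auto simp: lless_def)

lemma RC_ext0: "s \<in> set RC \<Longrightarrow> \<exists>m\<in>set MC. take (length s) m = s"
  apply (simp only: RC_def set_simps insert_iff empty_iff)
  apply (elim disjE; simp add: MC_def)
  done
lemma RC_ext: "s \<in> set RC \<Longrightarrow> \<exists>m. m \<in> set MC \<and> take (length s) m = s"
  using RC_ext0 by blast

lemma MC_len: "m \<in> set MC \<Longrightarrow> length m = 3"
  unfolding MC_def by auto

lemma RC_len3: "s \<in> set RC \<Longrightarrow> length s \<le> 3"
  unfolding RC_def by auto

lemma chain_label_eq:
  assumes s: "s \<in> set RC" and j: "1 \<le> j" "j < length s"
  shows "chain_label P0 le0 (lamF g) s j = lamF g s j"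
proof -
  define m where "m = (SOME m. max_chain P0 le0 m \<and> take (length s) m = s)"
  have "\<exists>m. max_chain P0 le0 m \<and> take (length s) m = s" using RC_ext[OF s] by (simp add: max_iff)
  then have mm: "max_chain P0 le0 m \<and> take (length s) m = s" unfolding m_def by (rule someI_ex)
  have nth: "\<And>k. k < length s \<Longrightarrow> m!k = s!k"
  proof -
    fix k assume "k < length s"
    then have "take (length s) m ! k = m ! k" by (rule nth_take)
    then show "m!k = s!k" using mm by simp
  qed
  have "lamF g m j = lamF g s j"
  proof (cases "j = 1")
    case True then show ?thesis using nth j by (simp add: lamF_def)
  next
    case False
    then have "2 < length s" using j by auto
    then show ?thesis using nth False by (simp add: lamF_def)
  qed
  then show ?thesis unfolding chain_label_def m_def[symmetric] .
qed

lemma C_lab: "C_labeling P0 le0 UNIV (\<le>) (lamF g)"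
  unfolding C_labeling_def
proof (intro conjI allI impI)
  show "partial_order_on' UNIV ((\<le>)::nat\<Rightarrow>nat\<Rightarrow>bool)" by (auto simp: partial_order_on'_def)
next
  fix m j show "lamF g m j \<in> UNIV" by simp
next
  fix m m' d j
  assume h: "max_chain P0 le0 m \<and> max_chain P0 le0 m' \<and> take (Suc d) m = take (Suc d) m'"
     and j: "1 \<le> j \<and> j \<le> d \<and> j < length m"
  have l: "length m = 3" "length m' = 3" using h by (auto simp: max_iff MC_len)
  have nth: "\<And>k. k \<le> j \<Longrightarrow> m!k = m'!k"
  proof -
    fix k assume "k \<le> j"
    then have k: "k < Suc d" using j by simp
    have "m ! k = take (Suc d) m ! k" using nth_take[OF k, of m] by simp
    also have "\<dots> = take (Suc d) m' ! k" using h by simp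
    also have "\<dots> = m' ! k" using nth_take[OF k, of m'] by simp
    finally show "m ! k = m' ! k" .
  qed
  show "lamF g m j = lamF g m' j"
  proof (cases "j = 1")
    case True then show ?thesis using nth[of 1] by (simp add: lamF_def)
  next
    case False then have "j = 2" using j l by simp
    then show ?thesis using nth[of 1] nth[of 2] by (simp add: lamF_def)
  qed
qed



lemma SC_distinct: "distinct SC" by (simp add: SC_def)

lemma CR_from_key:
  assumes key: "\<forall>r\<in>set RC. \<forall>y\<in>set [0..<6]. le0 (last r) y \<longrightarrow>
     length (filter (\<lambda>c. hd c = last r \<and> last c = y \<and> increasing_word (\<le>) (label_word P0 le0 (lamF g) r c)) SC) = 1"
  shows "CR_labeling P0 le0 UNIV (\<le>) (lamF g)"
  unfolding CR_labeling_def
proof (intro conjI allI impI)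
  show "C_labeling P0 le0 UNIV (\<le>) (lamF g)" by (rule C_lab)
  fix r y assume h: "rooted_chain P0 le0 r \<and> y \<in> P0 \<and> le0 (last r) y"
  then have r: "r \<in> set RC" and y: "y \<in> set [0..<6]" by (auto simp: rooted_iff mem_P0)
  have "length (filter (\<lambda>c. hd c = last r \<and> last c = y \<and> increasing_word (\<le>) (label_word P0 le0 (lamF g) r c)) SC) = 1"
    using key r y h by blast
  then have "\<exists>!c. c \<in> set SC \<and> (hd c = last r \<and> last c = y \<and> increasing_word (\<le>) (label_word P0 le0 (lamF g) r c))"
    by (rule ex1_filter[OF SC_distinct, THEN iffD2])
  then show "\<exists>!c. interval_chain P0 le0 (last r) y c \<and> increasing_word (\<le>) (label_word P0 le0 (lamF g) r c)"
    unfolding interval_iff by (simp add: conj_assoc)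
qed

lemma key1: "\<forall>r\<in>set RC. \<forall>y\<in>set [0..<6]. le0 (last r) y \<longrightarrow>
     length (filter (\<lambda>c. hd c = last r \<and> last c = y \<and> increasing_word (\<le>) (label_word P0 le0 (lamF g1) r c)) SC) = 1"
  by (simp add: RC_def SC_def label_word_def chain_label_eq lamF_def g1_def le0_def upt_rec)


lemma key2: "\<forall>r\<in>set RC. \<forall>y\<in>set [0..<6]. le0 (last r) y \<longrightarrow>
     length (filter (\<lambda>c. hd c = last r \<and> last c = y \<and> increasing_word (\<le>) (label_word P0 le0 (lamF g2) r c)) SC) = 1"
  by (simp add: RC_def SC_def label_word_def chain_label_eq lamF_def g2_def le0_def upt_rec)

definition AFkey :: "(nat \<Rightarrow> nat \<Rightarrow> nat) \<Rightarrow> bool" where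
  "AFkey g \<longleftrightarrow> (\<forall>r\<in>set RC. \<forall>c\<in>set SC. \<forall>c'\<in>set SC.
     hd c = last r \<and> hd c' = last r \<and> last c = last c' \<and>
     ascent_free_word (\<le>) (label_word P0 le0 (lamF g) r c) \<and>
     ascent_free_word (\<le>) (label_word P0 le0 (lamF g) r c') \<and> c \<noteq> c' \<longrightarrow>
     label_word P0 le0 (lamF g) r c \<noteq> label_word P0 le0 (lamF g) r c')"

lemma AF1: "AFkey g1"
  unfolding AFkey_def
  by (simp add: RC_def SC_def label_word_def chain_label_eq lamF_def g1_def upt_rec)

lemma AF2: "AFkey g2"
  unfolding AFkey_def
  by (simp add: RC_def SC_def label_word_def chain_label_eq lamF_def g2_def upt_rec)



definition SWp :: "(nat \<Rightarrow> nat \<Rightarrow> nat) \<Rightarrow> nat list \<Rightarrow> nat \<Rightarrow> bool" where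
  "SWp g m z \<longleftrightarrow> z \<noteq> m!1 \<and> m[1:=z] \<in> set MC \<and> lamF g (m[1:=z]) 1 = lamF g m 2 \<and> lamF g (m[1:=z]) 2 = lamF g m 1"

lemma all_j3: "(\<forall>j::nat. 1 \<le> j \<and> j < 3 \<longrightarrow> P j) \<longleftrightarrow> P 1 \<and> P 2"
proof
  assume "\<forall>j::nat. 1 \<le> j \<and> j < 3 \<longrightarrow> P j" then show "P 1 \<and> P 2" by simp
next
  assume h: "P 1 \<and> P 2"
  show "\<forall>j::nat. 1 \<le> j \<and> j < 3 \<longrightarrow> P j"
  proof (intro allI impI)
    fix j :: nat assume "1 \<le> j \<and> j < 3"
    then have "j = 1 \<or> j = 2" by arith
    then show "P j" using h by auto
  qed
qed

lemma sw_iff: assumes m: "m \<in> set MC" shows "switches P0 le0 (lamF g) m 1 z \<longleftrightarrow> SWp g m z"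
proof -
  have l: "length m = 3" using m by (rule MC_len)
  show ?thesis unfolding switches_def SWp_def max_iff l all_j3 by (simp add: numeral_2_eq_2)
qed

lemma MC_mid: "c \<in> set MC \<Longrightarrow> c!1 \<in> set [1,2,3]"
  unfolding MC_def by auto

lemma sw_mid: assumes m: "m \<in> set MC" and s: "SWp g m z" shows "z \<in> set [1,2,3]"
proof -
  have l: "length m = 3" using m by (rule MC_len)
  have "m[1:=z] \<in> set MC" using s by (simp add: SWp_def)
  then have "(m[1:=z])!1 \<in> set [1,2,3]" by (rule MC_mid)
  then show ?thesis using l by simp
qed

definition SWkey :: "(nat \<Rightarrow> nat \<Rightarrow> nat) \<Rightarrow> bool" where
  "SWkey g \<longleftrightarrow> (\<forall>m\<in>set MC. lamF g m 1 < lamF g m 2 \<longrightarrow> length (filter (SWp g m) [1,2,3]) = 1)"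

lemma SWkey1: "SWkey g1" unfolding SWkey_def SWp_def by (simp add: MC_def lamF_def g1_def)
lemma SWkey2: "SWkey g2" unfolding SWkey_def SWp_def by (simp add: MC_def lamF_def g2_def)

lemma rts_from: assumes k: "SWkey g" shows "rank_two_switching P0 le0 (\<le>) (lamF g)"
  unfolding rank_two_switching_def
proof (intro allI impI conjI)
  fix m i assume h: "max_chain P0 le0 m \<and> ascent_at (\<le>) (lamF g) m i"
  have m: "m \<in> set MC" using h by (simp add: max_iff)
  have l: "length m = 3" using m by (rule MC_len)
  have i: "i = 1" using h l unfolding ascent_at_def by arith
  have asc: "lamF g m 1 < lamF g m 2" using h i unfolding ascent_at_def by (simp add: numeral_2_eq_2)
  have "length (filter (SWp g m) [1,2,3]) = 1"
    using bspec[OF k[unfolded SWkey_def] m] asc by (rule mp)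
  then have e1: "\<exists>!z. z \<in> set [1,2,3] \<and> SWp g m z"
    by (rule ex1_filter[THEN iffD2, rotated]) simp
  then obtain z0 where z0: "z0 \<in> set [1,2,3] \<and> SWp g m z0"
    and u0: "\<forall>z. z \<in> set [1,2,3] \<and> SWp g m z \<longrightarrow> z = z0"
    using ex1_unfold[of "[1,2,3::nat]" "SWp g m"] by blast
  have u: "\<And>z. switches P0 le0 (lamF g) m i z \<Longrightarrow> z = z0"
  proof -
    fix z assume "switches P0 le0 (lamF g) m i z"
    then have "SWp g m z" using sw_iff[OF m] i by simp
    then have cj: "z \<in> set [1,2,3] \<and> SWp g m z" using sw_mid[OF m] by simp
    from u0 have "z \<in> set [1,2,3] \<and> SWp g m z \<longrightarrow> z = z0" by (rule spec)
    then show "z = z0" using cj by (rule mp)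
  qed
  show "\<exists>!z. switches P0 le0 (lamF g) m i z"
  proof (rule ex1I[of _ z0])
    show "switches P0 le0 (lamF g) m i z0" using z0 sw_iff[OF m] i by simp
    fix z assume "switches P0 le0 (lamF g) m i z" then show "z = z0" by (rule u)
  qed
  fix m' z z'
  assume h2: "max_chain P0 le0 m' \<and> take (i + 2) m' = take (i + 2) m \<and>
            switches P0 le0 (lamF g) m i z \<and> switches P0 le0 (lamF g) m' i z'"
  have l': "length m' = 3" using h2 by (simp add: max_iff MC_len)
  have "m' = m" using h2 i l l' by simp
  have "z = z0" using h2 by (intro u) simp
  moreover have "z' = z0" using h2 \<open>m' = m\<close> by (intro u) simp
  ultimately show "z = z'" by simp
qed

lemma CW_from:
  assumes CR: "CR_labeling P0 le0 UNIV (\<le>) (lamF g)" and AF: "AFkey g" and SK: "SWkey g"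
  shows "CW_labeling P0 le0 UNIV (\<le>) (lamF g)"
  unfolding CW_labeling_def
proof (intro conjI allI impI)
  show "CR_labeling P0 le0 UNIV (\<le>) (lamF g)" by (rule CR)
  show "rank_two_switching P0 le0 (\<le>) (lamF g)" by (rule rts_from[OF SK])
  fix r y c c'
  assume h: "rooted_chain P0 le0 r \<and> interval_chain P0 le0 (last r) y c \<and>
        interval_chain P0 le0 (last r) y c' \<and>
        ascent_free_word (\<le>) (label_word P0 le0 (lamF g) r c) \<and>
        ascent_free_word (\<le>) (label_word P0 le0 (lamF g) r c') \<and> c \<noteq> c'"
  have r: "r \<in> set RC" using h by (simp add: rooted_iff)
  have c: "c \<in> set SC" "hd c = last r" "last c = y" using h by (simp_all add: interval_iff)
  have c': "c' \<in> set SC" "hd c' = last r" "last c' = y" using h by (simp_all add: interval_iff)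
  have "\<forall>c\<in>set SC. \<forall>c'\<in>set SC.
     hd c = last r \<and> hd c' = last r \<and> last c = last c' \<and>
     ascent_free_word (\<le>) (label_word P0 le0 (lamF g) r c) \<and>
     ascent_free_word (\<le>) (label_word P0 le0 (lamF g) r c') \<and> c \<noteq> c' \<longrightarrow>
     label_word P0 le0 (lamF g) r c \<noteq> label_word P0 le0 (lamF g) r c'"
    using AF r unfolding AFkey_def by (rule bspec)
  note imp = bspec[OF bspec[OF this c(1)] c'(1)]
  show "label_word P0 le0 (lamF g) r c \<noteq> label_word P0 le0 (lamF g) r c'"
  proof (rule mp[OF imp])
    show "hd c = last r \<and> hd c' = last r \<and> last c = last c' \<and>
     ascent_free_word (\<le>) (label_word P0 le0 (lamF g) r c) \<and>
     ascent_free_word (\<le>) (label_word P0 le0 (lamF g) r c') \<and> c \<noteq> c'"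
      using c c' h by simp
  qed
qed

lemma CW1: "CW_labeling P0 le0 UNIV (\<le>) (lamF g1)"
  by (rule CW_from[OF CR_from_key[OF key1] AF1 SWkey1])
lemma CW2: "CW_labeling P0 le0 UNIV (\<le>) (lamF g2)"
  by (rule CW_from[OF CR_from_key[OF key2] AF2 SWkey2])


definition QX :: "(nat \<Rightarrow> nat \<Rightarrow> nat) \<Rightarrow> (nat list \<times> nat list) list" where
  "QX g = concat (map (\<lambda>c. if lamF g c 1 < lamF g c 2 then map (\<lambda>z. (c, c[1:=z])) (filter (SWp g c) [1,2,3]) else []) MC)"

lemma QX_mem: "(c,c') \<in> set (QX g) \<longleftrightarrow>
   c \<in> set MC \<and> lamF g c 1 < lamF g c 2 \<and> (\<exists>z. z \<in> set [1,2,3] \<and> SWp g c z \<and> c' = c[1:=z])"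
  unfolding QX_def by (auto split: if_splits)

lemma quad_iff: "quad_exchange P0 le0 (\<le>) (lamF g) c c' \<longleftrightarrow> (c,c') \<in> set (QX g)"
proof
  assume "quad_exchange P0 le0 (\<le>) (lamF g) c c'"
  then obtain m i z where h: "max_chain P0 le0 m" "take (length c) m = c" "Suc i < length c"
     "ascent_at (\<le>) (lamF g) m i" "switches P0 le0 (lamF g) m i z" "c' = c[i := z]"
    unfolding quad_exchange_def by blast
  have m: "m \<in> set MC" using h(1) by (simp add: max_iff)
  have l: "length m = 3" using m by (rule MC_len)
  have i: "i = 1" using h(4) l unfolding ascent_at_def by arith
  have "length (take (length c) m) = min (length m) (length c)" by (rule length_take)
  then have "length c = min 3 (length c)" using h(2) l by simp
  then have "length c \<le> 3" by (simp add: min_def split: if_splits)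
  then have lc: "length c = 3" using h(3) i by arith
  have cm: "c = m" using h(2) l lc by simp
  have asc: "lamF g m 1 < lamF g m 2" using h(4) i unfolding ascent_at_def by (simp add: numeral_2_eq_2)
  have sw: "SWp g m z" using h(5) i sw_iff[OF m] by simp
  have zz: "z \<in> set [1,2,3]" by (rule sw_mid[OF m sw])
  show "(c,c') \<in> set (QX g)" unfolding QX_mem using m asc sw zz h(6) cm i by blast
next
  assume "(c,c') \<in> set (QX g)"
  then obtain z where h: "c \<in> set MC" "lamF g c 1 < lamF g c 2" "SWp g c z" "c' = c[1:=z]"
    unfolding QX_mem by blast
  have l: "length c = 3" using h(1) by (rule MC_len)
  have "max_chain P0 le0 c" using h(1) by (simp add: max_iff)
  moreover have "ascent_at (\<le>) (lamF g) c 1" using h(2) l unfolding ascent_at_def by (simp add: numeral_2_eq_2)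
  moreover have "switches P0 le0 (lamF g) c 1 z" using h(3) sw_iff[OF h(1)] by simp
  ultimately show "quad_exchange P0 le0 (\<le>) (lamF g) c c'"
    unfolding quad_exchange_def using h(4) l by (intro exI[of _ c] exI[of _ 1] exI[of _ z]) simp
qed

lemma rtr_rep:
  assumes st: "\<And>a b. (a,b) \<in> set Xs \<Longrightarrow> rep a = rep b"
      and bk: "\<And>c d. rep c = rep d \<Longrightarrow> c = d \<or> (c,d) \<in> set Xs \<or> (d,c) \<in> set Xs"
  shows "(\<lambda>a b. (a,b) \<in> set Xs \<or> (b,a) \<in> set Xs)\<^sup>*\<^sup>* c d \<longleftrightarrow> rep c = rep d"
proof
  assume "(\<lambda>a b. (a,b) \<in> set Xs \<or> (b,a) \<in> set Xs)\<^sup>*\<^sup>* c d"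
  then show "rep c = rep d"
  proof (induction rule: rtranclp_induct)
    case base then show ?case by simp
  next
    case (step y z) then show ?case using assms(1)[of y z] assms(1)[of z y] by auto
  qed
next
  assume "rep c = rep d"
  then have "c = d \<or> (c,d) \<in> set Xs \<or> (d,c) \<in> set Xs" by (rule bk)
  then show "(\<lambda>a b. (a,b) \<in> set Xs \<or> (b,a) \<in> set Xs)\<^sup>*\<^sup>* c d"
  proof
    assume "c = d" then show ?thesis by simp
  next
    assume "(c,d) \<in> set Xs \<or> (d,c) \<in> set Xs"
    then show ?thesis by (rule r_into_rtranclp[where r = "\<lambda>a b. (a,b) \<in> set Xs \<or> (b,a) \<in> set Xs"])
  qed
qed

definition Hyp :: "(nat \<Rightarrow> nat \<Rightarrow> nat) \<Rightarrow> (nat list \<Rightarrow> nat list) \<Rightarrow> bool" where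
  "Hyp g rep \<longleftrightarrow> (\<forall>p\<in>set (QX g). rep (fst p) = rep (snd p)) \<and>
     (\<forall>c d. rep c = rep d \<longrightarrow> c = d \<or> (c,d) \<in> set (QX g) \<or> (d,c) \<in> set (QX g)) \<and>
     (\<forall>c. last (rep c) = last c)"

lemma Qeq:
  assumes H: "Hyp g rep"
  shows "Q_equiv P0 le0 (\<le>) (lamF g) c d \<longleftrightarrow> c \<in> set RC \<and> d \<in> set RC \<and> rep c = rep d"
proof -
  have s: "\<And>a b. (a,b) \<in> set (QX g) \<Longrightarrow> rep a = rep b" using H unfolding Hyp_def by fastforce
  have b: "\<And>c d. rep c = rep d \<Longrightarrow> c = d \<or> (c,d) \<in> set (QX g) \<or> (d,c) \<in> set (QX g)"
    using H unfolding Hyp_def by blast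
  have la: "\<And>c. last (rep c) = last c" using H unfolding Hyp_def by blast
  have e: "(\<lambda>a b. quad_exchange P0 le0 (\<le>) (lamF g) a b \<or> quad_exchange P0 le0 (\<le>) (lamF g) b a)
       = (\<lambda>a b. (a,b) \<in> set (QX g) \<or> (b,a) \<in> set (QX g))"
    by (intro ext) (simp add: quad_iff)
  have lc: "rep c = rep d \<Longrightarrow> last c = last d" using la by metis
  have r: "(\<lambda>a b. (a,b) \<in> set (QX g) \<or> (b,a) \<in> set (QX g))\<^sup>*\<^sup>* c d \<longleftrightarrow> rep c = rep d"
    by (rule rtr_rep[OF s b])
  show ?thesis unfolding Q_equiv_def e rooted_iff using r lc by auto
qed



definition cls :: "(nat \<Rightarrow> nat \<Rightarrow> nat) \<Rightarrow> nat list \<Rightarrow> nat list set" where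
  "cls g c = {d. Q_equiv P0 le0 (\<le>) (lamF g) c d}"

lemma carrier_eq: "Q_carrier P0 le0 (\<le>) (lamF g) = cls g ` set RC"
  unfolding Q_carrier_def cls_def rooted_iff by (rule Setcompr_eq_image)

lemma cls_mem: "Hyp g rep \<Longrightarrow> x \<in> cls g c \<longleftrightarrow> c \<in> set RC \<and> x \<in> set RC \<and> rep c = rep x"
  unfolding cls_def by (simp add: Qeq)

lemma cls_eq:
  assumes H: "Hyp g rep" and a: "a \<in> set RC" and b: "b \<in> set RC"
  shows "cls g a = cls g b \<longleftrightarrow> rep a = rep b"
proof
  assume e: "cls g a = cls g b"
  have "a \<in> cls g a" using cls_mem[OF H] a by simp
  then have "a \<in> cls g b" using e by simp
  then show "rep a = rep b" using cls_mem[OF H] by simp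
next
  assume e: "rep a = rep b"
  show "cls g a = cls g b"
  proof (rule set_eqI)
    fix x show "x \<in> cls g a \<longleftrightarrow> x \<in> cls g b" using cls_mem[OF H] a b e by simp
  qed
qed

definition Dp :: "(nat list \<Rightarrow> nat list) \<Rightarrow> nat list \<Rightarrow> nat list \<Rightarrow> bool" where
  "Dp rep a b \<longleftrightarrow> (\<exists>c\<in>set (filter (\<lambda>c. rep c = rep a) RC). \<exists>d\<in>set (filter (\<lambda>d. rep d = rep b) RC). set c \<subseteq> set d)"

definition DT :: "(nat list \<Rightarrow> nat list) \<Rightarrow> (nat list \<times> nat list) list" where
  "DT rep = [(a,b). a \<leftarrow> RC, b \<leftarrow> RC, Dp rep a b]"

lemma DT_mem: "a \<in> set RC \<Longrightarrow> b \<in> set RC \<Longrightarrow> (a,b) \<in> set (DT rep) \<longleftrightarrow> Dp rep a b"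
  unfolding DT_def by auto

lemma rel_cls:
  assumes H: "Hyp g rep" and a: "a \<in> set RC" and b: "b \<in> set RC"
  shows "(\<exists>c\<in>cls g a. \<exists>d\<in>cls g b. set c \<subseteq> set d) \<longleftrightarrow> (a,b) \<in> set (DT rep)"
proof
  assume "\<exists>c\<in>cls g a. \<exists>d\<in>cls g b. set c \<subseteq> set d"
  then obtain c d where c: "c \<in> cls g a" and d: "d \<in> cls g b" and s: "set c \<subseteq> set d" by blast
  have c': "c \<in> set (filter (\<lambda>c. rep c = rep a) RC)" using c cls_mem[OF H] by simp
  have d': "d \<in> set (filter (\<lambda>d. rep d = rep b) RC)" using d cls_mem[OF H] by simp
  have "Dp rep a b" unfolding Dp_def using c' d' s by blast
  then show "(a,b) \<in> set (DT rep)" using DT_mem[OF a b] by simp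
next
  assume "(a,b) \<in> set (DT rep)"
  then have "Dp rep a b" using DT_mem[OF a b] by simp
  then obtain c d where c': "c \<in> set (filter (\<lambda>c. rep c = rep a) RC)"
      and d': "d \<in> set (filter (\<lambda>d. rep d = rep b) RC)" and s: "set c \<subseteq> set d"
    unfolding Dp_def by blast
  have c: "c \<in> cls g a" using c' a cls_mem[OF H] by simp
  have d: "d \<in> cls g b" using d' b cls_mem[OF H] by simp
  show "\<exists>c\<in>cls g a. \<exists>d\<in>cls g b. set c \<subseteq> set d" using c d s by blast
qed

definition TR :: "(nat list \<Rightarrow> nat list) \<Rightarrow> bool" where
  "TR rep \<longleftrightarrow> (\<forall>p\<in>set (DT rep). \<forall>q\<in>set (DT rep). rep (snd p) = rep (fst q) \<longrightarrow> (fst p, snd q) \<in> set (DT rep))"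

lemma rtr_trans:
  assumes t: "\<And>x y z. R x y \<Longrightarrow> R y z \<Longrightarrow> R x z"
  shows "R\<^sup>*\<^sup>* x y \<longleftrightarrow> x = y \<or> R x y"
proof
  assume "R\<^sup>*\<^sup>* x y" then show "x = y \<or> R x y"
  proof (induction rule: rtranclp_induct)
    case base then show ?case by simp
  next
    case (step y z) then show ?case using t by blast
  qed
next
  assume "x = y \<or> R x y" then show "R\<^sup>*\<^sup>* x y" by auto
qed

lemma DT_RC: "p \<in> set (DT rep) \<Longrightarrow> fst p \<in> set RC \<and> snd p \<in> set RC"
  unfolding DT_def by auto

lemma Qle_cls:
  assumes H: "Hyp g rep" and T: "TR rep" and a: "a \<in> set RC" and b: "b \<in> set RC"
  shows "Q_le P0 le0 (\<le>) (lamF g) (cls g a) (cls g b) \<longleftrightarrow> rep a = rep b \<or> (a,b) \<in> set (DT rep)"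
proof -
  let ?A = "Q_carrier P0 le0 (\<le>) (lamF g)"
  let ?R = "\<lambda>X Y. X \<in> ?A \<and> Y \<in> ?A \<and> (\<exists>c\<in>X. \<exists>d\<in>Y. set c \<subseteq> set d)"
  have R: "\<And>X Y. ?R X Y \<longleftrightarrow> (\<exists>x\<in>set RC. \<exists>y\<in>set RC. X = cls g x \<and> Y = cls g y \<and> (x,y) \<in> set (DT rep))"
  proof -
    fix X Y
    show "?R X Y \<longleftrightarrow> (\<exists>x\<in>set RC. \<exists>y\<in>set RC. X = cls g x \<and> Y = cls g y \<and> (x,y) \<in> set (DT rep))"
    proof
      assume h: "?R X Y"
      then obtain x y where x: "x \<in> set RC" "X = cls g x" and y: "y \<in> set RC" "Y = cls g y"
        unfolding carrier_eq by blast
      have "(x,y) \<in> set (DT rep)" using h x y rel_cls[OF H x(1) y(1)] by simp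
      then show "\<exists>x\<in>set RC. \<exists>y\<in>set RC. X = cls g x \<and> Y = cls g y \<and> (x,y) \<in> set (DT rep)"
        using x y by blast
    next
      assume "\<exists>x\<in>set RC. \<exists>y\<in>set RC. X = cls g x \<and> Y = cls g y \<and> (x,y) \<in> set (DT rep)"
      then obtain x y where x: "x \<in> set RC" "X = cls g x" and y: "y \<in> set RC" "Y = cls g y"
          and d: "(x,y) \<in> set (DT rep)" by blast
      have "\<exists>c\<in>X. \<exists>d\<in>Y. set c \<subseteq> set d" using rel_cls[OF H x(1) y(1)] d x y by simp
      then show "?R X Y" unfolding carrier_eq using x y by blast
    qed
  qed
  have t: "\<And>X Y Z. ?R X Y \<Longrightarrow> ?R Y Z \<Longrightarrow> ?R X Z"
  proof -
    fix X Y Z assume h1: "?R X Y" and h2: "?R Y Z"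
    obtain x y where x: "x \<in> set RC" "X = cls g x" and y: "y \<in> set RC" "Y = cls g y"
        and d1: "(x,y) \<in> set (DT rep)" using h1 unfolding R by blast
    obtain y' z where y': "y' \<in> set RC" "Y = cls g y'" and z: "z \<in> set RC" "Z = cls g z"
        and d2: "(y',z) \<in> set (DT rep)" using h2 unfolding R by blast
    have "rep y = rep y'" using cls_eq[OF H y(1) y'(1)] y y' by simp
    then have "(x,z) \<in> set (DT rep)" using T d1 d2 unfolding TR_def by fastforce
    then show "?R X Z" unfolding R using x z by blast
  qed
  have rt: "?R\<^sup>*\<^sup>* (cls g a) (cls g b) \<longleftrightarrow> cls g a = cls g b \<or> ?R (cls g a) (cls g b)"
    by (rule rtr_trans[where R = ?R, OF t])
  have "Q_le P0 le0 (\<le>) (lamF g) (cls g a) (cls g b) \<longleftrightarrow> ?R\<^sup>*\<^sup>* (cls g a) (cls g b)"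
    unfolding Q_le_def ..
  also have "\<dots> \<longleftrightarrow> rep a = rep b \<or> (a,b) \<in> set (DT rep)"
  proof -
    note rt
    have "?R (cls g a) (cls g b) \<longleftrightarrow> (a,b) \<in> set (DT rep)"
      unfolding carrier_eq using rel_cls[OF H a b] a b by blast
    then show ?thesis using cls_eq[OF H a b] rt by simp
  qed
  finally show ?thesis .
qed



definition rep1 :: "nat list \<Rightarrow> nat list" where
  "rep1 c = (if c = [0,2,4] then [0,1,4] else if c = [0,2,5] then [0,1,5] else c)"
definition rep2 :: "nat list \<Rightarrow> nat list" where
  "rep2 c = (if c = [0,3,4] then [0,1,4] else if c = [0,2,5] then [0,1,5] else c)"

lemma QX1: "QX g1 = [([0,1,4],[0,2,4]),([0,1,5],[0,2,5])]"
  by (simp add: QX_def MC_def SWp_def lamF_def g1_def)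
lemma QX2: "QX g2 = [([0,1,4],[0,3,4]),([0,1,5],[0,2,5])]"
  by (simp add: QX_def MC_def SWp_def lamF_def g2_def)

lemma Hyp1: "Hyp g1 rep1"
  unfolding Hyp_def QX1 by (auto simp: rep1_def split: if_splits)
lemma Hyp2: "Hyp g2 rep2"
  unfolding Hyp_def QX2 by (auto simp: rep2_def split: if_splits)

lemma DT1: "DT rep1 = [([0], [0]), ([0], [0, 1]), ([0], [0, 2]), ([0], [0, 3]), ([0], [0, 1, 4]), ([0], [0, 1, 5]), ([0], [0, 2, 4]), ([0], [0, 2, 5]), ([0], [0, 3, 4]), ([0, 1], [0, 1]), ([0, 1], [0, 1, 4]), ([0, 1], [0, 1, 5]), ([0, 1], [0, 2, 4]), ([0, 1], [0, 2, 5]), ([0, 2], [0, 2]), ([0, 2], [0, 1, 4]), ([0, 2], [0, 1, 5]), ([0, 2], [0, 2, 4]), ([0, 2], [0, 2, 5]), ([0, 3], [0, 3]), ([0, 3], [0, 3, 4]), ([0, 1, 4], [0, 1, 4]), ([0, 1, 4], [0, 2, 4]), ([0, 1, 5], [0, 1, 5]), ([0, 1, 5], [0, 2, 5]), ([0, 2, 4], [0, 1, 4]), ([0, 2, 4], [0, 2, 4]), ([0, 2, 5], [0, 1, 5]), ([0, 2, 5], [0, 2, 5]), ([0, 3, 4], [0, 3, 4])]"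
  by (simp add: DT_def Dp_def RC_def rep1_def)
lemma DT2: "DT rep2 = [([0], [0]), ([0], [0, 1]), ([0], [0, 2]), ([0], [0, 3]), ([0], [0, 1, 4]), ([0], [0, 1, 5]), ([0], [0, 2, 4]), ([0], [0, 2, 5]), ([0], [0, 3, 4]), ([0, 1], [0, 1]), ([0, 1], [0, 1, 4]), ([0, 1], [0, 1, 5]), ([0, 1], [0, 2, 5]), ([0, 1], [0, 3, 4]), ([0, 2], [0, 2]), ([0, 2], [0, 1, 5]), ([0, 2], [0, 2, 4]), ([0, 2], [0, 2, 5]), ([0, 3], [0, 3]), ([0, 3], [0, 1, 4]), ([0, 3], [0, 3, 4]), ([0, 1, 4], [0, 1, 4]), ([0, 1, 4], [0, 3, 4]), ([0, 1, 5], [0, 1, 5]), ([0, 1, 5], [0, 2, 5]), ([0, 2, 4], [0, 2, 4]), ([0, 2, 5], [0, 1, 5]), ([0, 2, 5], [0, 2, 5]), ([0, 3, 4], [0, 1, 4]), ([0, 3, 4], [0, 3, 4])]"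
  by (simp add: DT_def Dp_def RC_def rep2_def)

lemma TR1: "TR rep1" unfolding TR_def DT1 by (simp add: rep1_def)
lemma TR2: "TR rep2" unfolding TR_def DT2 by (simp add: rep2_def)


definition twins :: "'a set \<Rightarrow> ('a \<Rightarrow> 'a \<Rightarrow> bool) \<Rightarrow> bool" where
  "twins A r \<longleftrightarrow> (\<exists>X\<in>A. \<exists>Y\<in>A. X \<noteq> Y \<and>
     (\<forall>Z\<in>A. Z \<noteq> X \<longrightarrow> Z \<noteq> Y \<longrightarrow> (r Z X \<longleftrightarrow> r Z Y) \<and> (r X Z \<longleftrightarrow> r Y Z)))"

lemma twins_iso:
  assumes iso: "order_iso A ra B rb" and tw: "twins A ra"
  shows "twins B rb"
proof -
  obtain f where bij: "bij_betw f A B" and pr: "\<forall>x\<in>A. \<forall>y\<in>A. ra x y \<longleftrightarrow> rb (f x) (f y)"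
    using iso unfolding order_iso_def by blast
  obtain X Y where X: "X \<in> A" and Y: "Y \<in> A" and ne: "X \<noteq> Y"
    and t: "\<forall>Z\<in>A. Z \<noteq> X \<longrightarrow> Z \<noteq> Y \<longrightarrow> (ra Z X \<longleftrightarrow> ra Z Y) \<and> (ra X Z \<longleftrightarrow> ra Y Z)"
    using tw unfolding twins_def by blast
  have inj: "inj_on f A" and img: "f ` A = B" using bij unfolding bij_betw_def by auto
  have fX: "f X \<in> B" and fY: "f Y \<in> B" using X Y img by auto
  have fne: "f X \<noteq> f Y" using inj X Y ne unfolding inj_on_def by blast
  have "\<forall>Z'\<in>B. Z' \<noteq> f X \<longrightarrow> Z' \<noteq> f Y \<longrightarrow> (rb Z' (f X) \<longleftrightarrow> rb Z' (f Y)) \<and> (rb (f X) Z' \<longleftrightarrow> rb (f Y) Z')"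
  proof (intro ballI impI)
    fix Z' assume Z': "Z' \<in> B" and n1: "Z' \<noteq> f X" and n2: "Z' \<noteq> f Y"
    obtain Z where Z: "Z \<in> A" and ZZ: "Z' = f Z" using Z' img by blast
    have "Z \<noteq> X" "Z \<noteq> Y" using n1 n2 ZZ by auto
    then have tz: "(ra Z X \<longleftrightarrow> ra Z Y) \<and> (ra X Z \<longleftrightarrow> ra Y Z)" using t Z by blast
    have e1: "ra Z X \<longleftrightarrow> rb Z' (f X)" using pr Z X ZZ by blast
    have e2: "ra Z Y \<longleftrightarrow> rb Z' (f Y)" using pr Z Y ZZ by blast
    have e3: "ra X Z \<longleftrightarrow> rb (f X) Z'" using pr Z X ZZ by blast
    have e4: "ra Y Z \<longleftrightarrow> rb (f Y) Z'" using pr Z Y ZZ by blast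
    show "(rb Z' (f X) \<longleftrightarrow> rb Z' (f Y)) \<and> (rb (f X) Z' \<longleftrightarrow> rb (f Y) Z')"
      using tz e1 e2 e3 e4 by simp
  qed
  then show ?thesis unfolding twins_def using fX fY fne by blast
qed

definition TWg :: "'a set \<Rightarrow> ('a \<Rightarrow> 'a \<Rightarrow> bool) \<Rightarrow> ('a \<Rightarrow> 'a \<Rightarrow> bool) \<Rightarrow> bool" where
  "TWg A e R \<longleftrightarrow> (\<exists>a\<in>A. \<exists>b\<in>A. \<not> e a b \<and>
     (\<forall>c\<in>A. \<not> e c a \<longrightarrow> \<not> e c b \<longrightarrow> (R c a \<longleftrightarrow> R c b) \<and> (R a c \<longleftrightarrow> R b c)))"

lemma twins_img:
  assumes E: "\<And>a b. a \<in> A \<Longrightarrow> b \<in> A \<Longrightarrow> f a = f b \<longleftrightarrow> e a b"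
      and Rr: "\<And>a b. a \<in> A \<Longrightarrow> b \<in> A \<Longrightarrow> r (f a) (f b) \<longleftrightarrow> R a b"
  shows "twins (f ` A) r \<longleftrightarrow> TWg A e R"
proof
  assume "twins (f ` A) r"
  then obtain X Y where X: "X \<in> f ` A" and Y: "Y \<in> f ` A" and ne: "X \<noteq> Y"
    and t: "\<forall>Z\<in>f ` A. Z \<noteq> X \<longrightarrow> Z \<noteq> Y \<longrightarrow> (r Z X \<longleftrightarrow> r Z Y) \<and> (r X Z \<longleftrightarrow> r Y Z)"
    unfolding twins_def by blast
  obtain a where a: "a \<in> A" "X = f a" using X by blast
  obtain b where b: "b \<in> A" "Y = f b" using Y by blast
  have nab: "\<not> e a b" using E[OF a(1) b(1)] ne a b by simp
  have "\<forall>c\<in>A. \<not> e c a \<longrightarrow> \<not> e c b \<longrightarrow> (R c a \<longleftrightarrow> R c b) \<and> (R a c \<longleftrightarrow> R b c)"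
  proof (intro ballI impI)
    fix c assume c: "c \<in> A" and n1: "\<not> e c a" and n2: "\<not> e c b"
    have "f c \<noteq> X" "f c \<noteq> Y" using E[OF c a(1)] E[OF c b(1)] n1 n2 a b by auto
    moreover have "f c \<in> f ` A" using c by blast
    ultimately have "(r (f c) X \<longleftrightarrow> r (f c) Y) \<and> (r X (f c) \<longleftrightarrow> r Y (f c))" using t by blast
    then show "(R c a \<longleftrightarrow> R c b) \<and> (R a c \<longleftrightarrow> R b c)"
      using Rr[OF c a(1)] Rr[OF c b(1)] Rr[OF a(1) c] Rr[OF b(1) c] a b by simp
  qed
  then show "TWg A e R" unfolding TWg_def using a(1) b(1) nab by blast
next
  assume "TWg A e R"
  then obtain a b where a: "a \<in> A" and b: "b \<in> A" and nab: "\<not> e a b"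
    and t: "\<forall>c\<in>A. \<not> e c a \<longrightarrow> \<not> e c b \<longrightarrow> (R c a \<longleftrightarrow> R c b) \<and> (R a c \<longleftrightarrow> R b c)"
    unfolding TWg_def by blast
  have ne: "f a \<noteq> f b" using E[OF a b] nab by simp
  have "\<forall>Z\<in>f ` A. Z \<noteq> f a \<longrightarrow> Z \<noteq> f b \<longrightarrow> (r Z (f a) \<longleftrightarrow> r Z (f b)) \<and> (r (f a) Z \<longleftrightarrow> r (f b) Z)"
  proof (intro ballI impI)
    fix Z assume Z: "Z \<in> f ` A" and n1: "Z \<noteq> f a" and n2: "Z \<noteq> f b"
    obtain c where c: "c \<in> A" "Z = f c" using Z by blast
    have "\<not> e c a" "\<not> e c b" using E[OF c(1) a] E[OF c(1) b] n1 n2 c by auto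
    then have "(R c a \<longleftrightarrow> R c b) \<and> (R a c \<longleftrightarrow> R b c)" using t c(1) by blast
    then show "(r Z (f a) \<longleftrightarrow> r Z (f b)) \<and> (r (f a) Z \<longleftrightarrow> r (f b) Z)"
      using Rr[OF c(1) a] Rr[OF c(1) b] Rr[OF a c(1)] Rr[OF b c(1)] c by simp
  qed
  then show "twins (f ` A) r" unfolding twins_def using a b ne by blast
qed

lemma twins_Q:
  assumes H: "Hyp g rep" and T: "TR rep"
  shows "twins (Q_carrier P0 le0 (\<le>) (lamF g)) (Q_le P0 le0 (\<le>) (lamF g)) \<longleftrightarrow>
     TWg (set RC) (\<lambda>a b. rep a = rep b) (\<lambda>a b. rep a = rep b \<or> (a,b) \<in> set (DT rep))"
  unfolding carrier_eq
  by (rule twins_img) (simp_all add: cls_eq[OF H] Qle_cls[OF H T])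

lemma TW1: "TWg (set RC) (\<lambda>a b. rep1 a = rep1 b) (\<lambda>a b. rep1 a = rep1 b \<or> (a,b) \<in> set (DT rep1))"
  unfolding TWg_def
  apply (rule bexI[of _ "[0,1]"])
   apply (rule bexI[of _ "[0,2]"])
  by (simp_all add: DT1 rep1_def RC_def)

lemma TW2: "\<not> TWg (set RC) (\<lambda>a b. rep2 a = rep2 b) (\<lambda>a b. rep2 a = rep2 b \<or> (a,b) \<in> set (DT rep2))"
  unfolding TWg_def DT2 by (simp add: rep2_def RC_def)

theorem theorem5p22:
  shows "\<exists>(P :: nat set) le L1 lle1 lam1 L2 lle2 lam2.
     finite_graded_poset_0 P le \<and>
     CW_labeling P le L1 lle1 lam1 \<and> CW_labeling P le L2 lle2 lam2 \<and>
     \<not> order_iso (Q_carrier P le lle1 lam1) (Q_le P le lle1 lam1)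
                 (Q_carrier P le lle2 lam2) (Q_le P le lle2 lam2)"
proof -
  have t1: "twins (Q_carrier P0 le0 (\<le>) (lamF g1)) (Q_le P0 le0 (\<le>) (lamF g1))"
    using twins_Q[OF Hyp1 TR1] TW1 by simp
  have t2: "\<not> twins (Q_carrier P0 le0 (\<le>) (lamF g2)) (Q_le P0 le0 (\<le>) (lamF g2))"
    using twins_Q[OF Hyp2 TR2] TW2 by simp
  have ni: "\<not> order_iso (Q_carrier P0 le0 (\<le>) (lamF g1)) (Q_le P0 le0 (\<le>) (lamF g1))
                 (Q_carrier P0 le0 (\<le>) (lamF g2)) (Q_le P0 le0 (\<le>) (lamF g2))"
    using twins_iso t1 t2 by blast
  show ?thesis
    using graded CW1 CW2 ni by blast
qed


end
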